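(* The SSL scheme $(\mathsf{Setup},\mathsf{Gen},\mathsf{Lessor},\mathsf{Run},\mathsf{Check})$ described in the context satisfies $\varepsilon$-correctness with $\varepsilon=\mathrm{negl}(\lambda)$.
   Context: Correctness: for all $C\in\mathcal{C}_\lambda$ with input length $n$, over $\mathsf{crs}\leftarrow\mathsf{Setup}(1^\lambda)$, $\mathsf{sk}\leftarrow\mathsf{Gen}(\mathsf{crs})$, $\rho_C\leftarrow\mathsf{Lessor}(\mathsf{sk},C)$: $\Pr[\forall x\in\{0,1\}^n: y=C(x)$ where $(\rho',y)\leftarrow\mathsf{Run}(\mathsf{crs},\rho_C,x)]\ge1-\varepsilon$ and $\Pr[\mathsf{Check}(\mathsf{sk},\rho_C)=1]\ge1-\varepsilon$. Ingredients: $\mathcal{C}=\{\mathcal{C}_\lambda\}$ is a class of $\mathcal{S}$-searchable circuits (a PPT $\mathcal{S}$ outputs, on $C$, an $x$ with $C(x)=1$) with distribution $\mathcal{D}_{\mathcal{C}}$; $\mathsf{qIHO}=(\mathsf{Obf},\mathsf{Eval})$ is a perfectly correct q-input-hiding obfuscator for $\mathcal{C}$; $\mathsf{shO}$ is a subspace hiding obfuscator over $\mathbb{Z}_q$ (its obfuscation of a subspace $A$ computes the indicator $\mathbb{1}_A$ on all inputs except with negligible probability); $(\mathsf{CRSGen},\mathcal{P},\mathcal{V})$ is a (sub-exponentially secure) q-simulation-extractable NIZK for NP with perfect completeness. For a subspace $A\subseteq\mathbb{Z}_q^\lambda$, $|A\rangle=|A|^{-1/2}\sum_{a\in A}|a\rangle$,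 $A^\perp$ is its dual, and $\mathsf{FT}$ is the quantum Fourier transform over $\mathbb{Z}_q^\lambda$ (so $\mathsf{FT}|A\rangle=|A^\perp\rangle$). Scheme: $\mathsf{Setup}(1^\lambda)$: output $\mathsf{crs}\leftarrow\mathsf{CRSGen}(1^{\lambda+n})$. $\mathsf{Gen}(\mathsf{crs})$: choose a uniformly random $\lambda/2$-dimensional subspace $A\subset\mathbb{Z}_q^\lambda$; $\mathsf{sk}=A$. $\mathsf{Lessor}(A,C)$: prepare $|A\rangle$; $\widetilde{C}\leftarrow\mathsf{qIHO}.\mathsf{Obf}(C;r_o)$; $\widetilde{g}\leftarrow\mathsf{shO}(A;r_A)$; $\widetilde{g_\perp}\leftarrow\mathsf{shO}(A^\perp;r_{A^\perp})$; $x=\mathcal{S}(C)$; $\pi\leftarrow\mathcal{P}(\mathsf{crs},(\widetilde{g},\widetilde{g_\perp},\widetilde{C}),(A,r_o,r_A,r_{A^\perp},C,x))$ for the NP relation: $\widetilde{g}=\mathsf{shO}(A;r_A)$, $\widetilde{g_\perp}=\mathsf{shO}(A^\perp;r_{A^\perp})$, $\widetilde{C}=\mathsf{qIHO}.\mathsf{Obf}(C;r_o)$, $C(x)=1$; output $(|A\rangle\langle A|,\widetilde{g},\widetilde{g_\perp},\widetilde{C},\pi)$. $\mathsf{Run}(\mathsf{crs},(\rho,\widetilde{g},\widetilde{g_\perp},\widetilde{C},\pi),x)$: measure the classical registers; apply $|v\rangle|y\rangle\mapsto|v\rangle|y\oplus\widetilde{g}(v)\rangle$ to $\rho\otimes|0\rangle\langle0|$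 and measure the last bit, getting $a$; apply $\mathsf{FT}$ to the post-measurement state, apply $|v\rangle|y\rangle\mapsto|v\rangle|y\oplus\widetilde{g_\perp}(v)\rangle$ with a fresh ancilla and measure, getting $b$; apply $\mathsf{FT}$ again to get $\rho''$; compute $c\leftarrow\mathcal{V}(\mathsf{crs},(\widetilde{g},\widetilde{g_\perp},\widetilde{C}),\pi)$; if $a=0$ or $b=0$ or $c=0$ output $\bot$; otherwise output $(\rho'',\widetilde{g},\widetilde{g_\perp},\widetilde{C},\pi)$ and $y=\mathsf{qIHO}.\mathsf{Eval}(\widetilde{C},x)$. $\mathsf{Check}(A,(\rho,\dots))$: measure $\{|A\rangle\langle A|,I-|A\rangle\langle A|\}$ on $\rho$ and output $1$ iff the outcome is $|A\rangle\langle A|$. *)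

theory Defs
  imports "HOL-Probability.Probability" "HOL-Computational_Algebra.Primes"
begin

definition negligible :: "(nat \<Rightarrow> real) \<Rightarrow> bool" where
  "negligible f \<longleftrightarrow> (\<forall>c::nat. \<forall>\<^sub>F l in sequentially. \<bar>f l\<bar> \<le> inverse (real l ^ c))"

definition zqvecs :: "nat \<Rightarrow> nat \<Rightarrow> nat list set" where
  "zqvecs q l = {v. length v = l \<and> set v \<subseteq> {..<q}}"

definition zq_add :: "nat \<Rightarrow> nat list \<Rightarrow> nat list \<Rightarrow> nat list" where
  "zq_add q u v = map2 (\<lambda>a b. (a + b) mod q) u v"

definition zq_smul :: "nat \<Rightarrow> nat \<Rightarrow> nat list \<Rightarrow> nat list" where
  "zq_smul q c v = map (\<lambda>a. (c * a) mod q) v"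

definition zq_dot :: "nat list \<Rightarrow> nat list \<Rightarrow> nat" where
  "zq_dot u v = sum_list (map2 (*) u v)"

definition is_subspace :: "nat \<Rightarrow> nat \<Rightarrow> nat list set \<Rightarrow> bool" where
  "is_subspace q l A \<longleftrightarrow> A \<subseteq> zqvecs q l \<and> replicate l 0 \<in> A \<and>
     (\<forall>u\<in>A. \<forall>v\<in>A. zq_add q u v \<in> A) \<and> (\<forall>c<q. \<forall>v\<in>A. zq_smul q c v \<in> A)"

(* a subspace of Z_q^l (q prime) has dimension d iff it has q^d elements *)
definition subspaces_dim :: "nat \<Rightarrow> nat \<Rightarrow> nat \<Rightarrow> nat list set set" where
  "subspaces_dim q l d = {A. is_subspace q l A \<and> card A = q ^ d}"

definition zq_dual :: "nat \<Rightarrow> nat \<Rightarrow> nat list set \<Rightarrow> nat list set" where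
  "zq_dual q l A = {u \<in> zqvecs q l. \<forall>a\<in>A. zq_dot u a mod q = 0}"

(* ---------- pure quantum states on C^(Z_q^l): amplitude functions ---------- *)

type_synonym qstate = "nat list \<Rightarrow> complex"

definition subspace_state :: "nat list set \<Rightarrow> qstate" where
  "subspace_state A = (\<lambda>v. if v \<in> A then complex_of_real (1 / sqrt (real (card A))) else 0)"

definition qft :: "nat \<Rightarrow> nat \<Rightarrow> qstate \<Rightarrow> qstate" where
  "qft q l \<psi> = (\<lambda>u. if u \<in> zqvecs q l then
      complex_of_real (1 / sqrt (real q ^ l)) *
        (\<Sum>v\<in>zqvecs q l. cis (2 * pi / real q) ^ zq_dot u v * \<psi> v)
    else 0)"

definition sqnorm :: "nat \<Rightarrow> nat \<Rightarrow> qstate \<Rightarrow> real" where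
  "sqnorm q l \<psi> = (\<Sum>v\<in>zqvecs q l. (cmod (\<psi> v))\<^sup>2)"

definition proj_ind :: "(nat list \<Rightarrow> bool) \<Rightarrow> qstate \<Rightarrow> qstate" where
  "proj_ind f \<psi> = (\<lambda>v. if f v then \<psi> v else 0)"

definition normalize_state :: "nat \<Rightarrow> nat \<Rightarrow> qstate \<Rightarrow> qstate" where
  "normalize_state q l \<psi> = (if sqnorm q l \<psi> = 0 then \<psi>
      else (\<lambda>v. \<psi> v / complex_of_real (sqrt (sqnorm q l \<psi>))))"

(* Computing |v>|y> -> |v>|y xor f(v)> into a fresh ancilla and measuring the ancilla
   = projective measurement {P_f, I - P_f}; returns (outcome, post-measurement state). *)
definition measure_ind :: "nat \<Rightarrow> nat \<Rightarrow> (nat list \<Rightarrow> bool) \<Rightarrow> qstate \<Rightarrow> (bool \<times> qstate) pmf" where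
  "measure_ind q l f \<psi> =
     map_pmf (\<lambda>b. (b, normalize_state q l (proj_ind (if b then f else (\<lambda>v. \<not> f v)) \<psi>)))
       (bernoulli_pmf (sqnorm q l (proj_ind f \<psi>)))"

(* NP relation of the NIZK:  statement (g, g_perp, C~), witness (A, r_o, r_A, r_Aperp, C, x) *)
definition ssl_rel ::
  "(nat \<Rightarrow> nat) \<Rightarrow> (nat \<Rightarrow> nat list set \<Rightarrow> 'rs \<Rightarrow> 'p) \<Rightarrow> (nat \<Rightarrow> 'c \<Rightarrow> 'ro \<Rightarrow> 'o) \<Rightarrow>
   ('c \<Rightarrow> bool list \<Rightarrow> bool) \<Rightarrow> nat \<Rightarrow> ('p \<times> 'p \<times> 'o) \<Rightarrow>
   (nat list set \<times> 'ro \<times> 'rs \<times> 'rs \<times> 'c \<times> bool list) \<Rightarrow> bool" where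
  "ssl_rel q shO Obf circ l st w =
     (case st of (g, gp, Ct) \<Rightarrow> case w of (A, ro, rA, rAp, C, x) \<Rightarrow>
        g = shO l A rA \<and> gp = shO l (zq_dual (q l) l A) rAp \<and> Ct = Obf l C ro \<and> circ C x)"

definition ssl_gen :: "(nat \<Rightarrow> nat) \<Rightarrow> nat \<Rightarrow> 'crs \<Rightarrow> nat list set pmf" where
  "ssl_gen q l crs = pmf_of_set (subspaces_dim (q l) l (l div 2))"

definition ssl_lessor ::
  "(nat \<Rightarrow> nat) \<Rightarrow> (nat \<Rightarrow> nat list set \<Rightarrow> 'rs \<Rightarrow> 'p) \<Rightarrow> (nat \<Rightarrow> 'rs pmf) \<Rightarrow>
   (nat \<Rightarrow> 'c \<Rightarrow> 'ro \<Rightarrow> 'o) \<Rightarrow> (nat \<Rightarrow> 'ro pmf) \<Rightarrow> ('c \<Rightarrow> bool list pmf) \<Rightarrow>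
   ('crs \<Rightarrow> ('p \<times> 'p \<times> 'o) \<Rightarrow> (nat list set \<times> 'ro \<times> 'rs \<times> 'rs \<times> 'c \<times> bool list) \<Rightarrow> 'pf pmf) \<Rightarrow>
   nat \<Rightarrow> 'crs \<Rightarrow> nat list set \<Rightarrow> 'c \<Rightarrow> (qstate \<times> 'p \<times> 'p \<times> 'o \<times> 'pf) pmf" where
  "ssl_lessor q shO rs_dist Obf ro_dist S Prov l crs A C = do {
     ro \<leftarrow> ro_dist l;
     rA \<leftarrow> rs_dist l;
     rAp \<leftarrow> rs_dist l;
     x \<leftarrow> S C;
     \<pi> \<leftarrow> Prov crs (shO l A rA, shO l (zq_dual (q l) l A) rAp, Obf l C ro) (A, ro, rA, rAp, C, x);
     return_pmf (subspace_state A, shO l A rA, shO l (zq_dual (q l) l A) rAp, Obf l C ro, \<pi>)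
   }"

(* Run: None stands for output \<bottom>; otherwise Some (new lease, y) *)
definition ssl_run ::
  "(nat \<Rightarrow> nat) \<Rightarrow> ('p \<Rightarrow> nat list \<Rightarrow> bool) \<Rightarrow> ('o \<Rightarrow> bool list \<Rightarrow> bool) \<Rightarrow>
   ('crs \<Rightarrow> ('p \<times> 'p \<times> 'o) \<Rightarrow> 'pf \<Rightarrow> bool) \<Rightarrow> nat \<Rightarrow> 'crs \<Rightarrow>
   (qstate \<times> 'p \<times> 'p \<times> 'o \<times> 'pf) \<Rightarrow> bool list \<Rightarrow>
   ((qstate \<times> 'p \<times> 'p \<times> 'o \<times> 'pf) \<times> bool) option pmf" where
  "ssl_run q evalP Eval Ver l crs lease x =
     (case lease of (\<psi>, g, gp, Ct, \<pi>) \<Rightarrow> do {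
        m1 \<leftarrow> measure_ind (q l) l (evalP g) \<psi>;
        m2 \<leftarrow> measure_ind (q l) l (evalP gp) (qft (q l) l (snd m1));
        return_pmf (if fst m1 \<and> fst m2 \<and> Ver crs (g, gp, Ct) \<pi>
                    then Some ((qft (q l) l (snd m2), g, gp, Ct, \<pi>), Eval Ct x)
                    else None)
      })"

(* Check: measure {|A><A|, I - |A><A|} *)
definition ssl_check :: "(nat \<Rightarrow> nat) \<Rightarrow> nat \<Rightarrow> nat list set \<Rightarrow>
   (qstate \<times> 'p \<times> 'p \<times> 'o \<times> 'pf) \<Rightarrow> bool pmf" where
  "ssl_check q l A lease = (case lease of (\<psi>, _) \<Rightarrow>
     bernoulli_pmf ((cmod (\<Sum>v\<in>zqvecs (q l) l. cnj (subspace_state A v) * \<psi> v))\<^sup>2))"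

(* crs <- Setup(1^l) = CRSGen(1^(l+n));  sk <- Gen(crs);  rho_C <- Lessor(sk, C) *)
definition ssl_exp ::
  "(nat \<Rightarrow> nat) \<Rightarrow> (nat \<Rightarrow> nat) \<Rightarrow> (nat \<Rightarrow> 'crs pmf) \<Rightarrow>
   (nat \<Rightarrow> nat list set \<Rightarrow> 'rs \<Rightarrow> 'p) \<Rightarrow> (nat \<Rightarrow> 'rs pmf) \<Rightarrow>
   (nat \<Rightarrow> 'c \<Rightarrow> 'ro \<Rightarrow> 'o) \<Rightarrow> (nat \<Rightarrow> 'ro pmf) \<Rightarrow> ('c \<Rightarrow> bool list pmf) \<Rightarrow>
   ('crs \<Rightarrow> ('p \<times> 'p \<times> 'o) \<Rightarrow> (nat list set \<times> 'ro \<times> 'rs \<times> 'rs \<times> 'c \<times> bool list) \<Rightarrow> 'pf pmf) \<Rightarrow>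
   nat \<Rightarrow> 'c \<Rightarrow> ('crs \<times> nat list set \<times> (qstate \<times> 'p \<times> 'p \<times> 'o \<times> 'pf)) pmf" where
  "ssl_exp q n CRSGen shO rs_dist Obf ro_dist S Prov l C = do {
     crs \<leftarrow> CRSGen (l + n l);
     A \<leftarrow> ssl_gen q l crs;
     lease \<leftarrow> ssl_lessor q shO rs_dist Obf ro_dist S Prov l crs A C;
     return_pmf (crs, A, lease)
   }"

end

theory Submission
  imports Defs
begin

lemma zq_dot_Cons[simp]: "zq_dot (x#u) (y#v) = x*y + zq_dot u v"
  by (simp add: zq_dot_def)
lemma zq_dot_Nil[simp]: "zq_dot [] v = 0" "zq_dot u [] = 0"
  by (auto simp: zq_dot_def)
lemma zq_add_Cons[simp]: "zq_add q (x#u) (y#v) = ((x+y) mod q) # zq_add q u v"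
  by (simp add: zq_add_def)
lemma zq_add_Nil[simp]: "zq_add q [] v = []" "zq_add q u [] = []"
  by (auto simp: zq_add_def)
lemma zq_smul_Cons[simp]: "zq_smul q c (x#u) = ((c*x) mod q) # zq_smul q c u"
  by (simp add: zq_smul_def)
lemma zq_smul_Nil[simp]: "zq_smul q c [] = []"
  by (simp add: zq_smul_def)

lemma zq_dot_comm: "zq_dot u v = zq_dot v u"
proof (induction u arbitrary: v)
  case Nil then show ?case by simp
next
  case (Cons x u) then show ?case by (cases v) auto
qed

lemma zq_dot_zero: "zq_dot (replicate n 0) a = 0"
proof (induction n arbitrary: a)
  case 0 then show ?case by simp
next
  case (Suc n) then show ?case by (cases a) auto
qed

lemma zq_dot_add_left: "length u = length w \<Longrightarrow>
  zq_dot (zq_add q u w) a mod q = (zq_dot u a + zq_dot w a) mod q"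
proof (induction u arbitrary: w a)
  case Nil then show ?case by simp
next
  case (Cons x u)
  then obtain y w' where w: "w = y # w'" by (cases w) auto
  show ?case
  proof (cases a)
    case Nil then show ?thesis using w by simp
  next
    case (Cons b a')
    have IH: "zq_dot (zq_add q u w') a' mod q = (zq_dot u a' + zq_dot w' a') mod q"
      using Cons.IH Cons.prems w by simp
    have "zq_dot (zq_add q (x#u) w) a mod q = ((x+y) mod q * b + zq_dot (zq_add q u w') a') mod q"
      using w Cons by simp
    also have "\<dots> = ((x+y) * b + (zq_dot u a' + zq_dot w' a')) mod q"
      using IH by (metis mod_add_cong mod_mult_left_eq)
    also have "\<dots> = (zq_dot (x#u) a + zq_dot w a) mod q"
      using w Cons by (simp add: algebra_simps)
    finally show ?thesis .
  qed
qed

lemma zq_dot_smul_left: "zq_dot (zq_smul q c u) a mod q = (c * zq_dot u a) mod q"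
proof (induction u arbitrary: a)
  case Nil then show ?case by simp
next
  case (Cons x u)
  show ?case
  proof (cases a)
    case Nil then show ?thesis by simp
  next
    case (Cons b a')
    have "zq_dot (zq_smul q c (x#u)) a mod q = ((c*x) mod q * b + zq_dot (zq_smul q c u) a') mod q"
      using Cons by simp
    also have "\<dots> = ((c*x) * b + c * zq_dot u a') mod q"
      using Cons.IH by (metis mod_add_cong mod_mult_left_eq)
    also have "\<dots> = (c * zq_dot (x#u) a) mod q"
      using Cons by (simp add: algebra_simps)
    finally show ?thesis .
  qed
qed

lemma zq_add_len: "length (zq_add q u v) = min (length u) (length v)"
  by (simp add: zq_add_def)
lemma zq_smul_len: "length (zq_smul q c u) = length u"
  by (simp add: zq_smul_def)
lemma zq_add_zqvecs: "0 < q \<Longrightarrow> u \<in> zqvecs q l \<Longrightarrow> v \<in> zqvecs q l \<Longrightarrow> zq_add q u v \<in> zqvecs q l"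
  by (auto simp: zqvecs_def zq_add_def set_zip)
lemma zq_smul_zqvecs: "0 < q \<Longrightarrow> u \<in> zqvecs q l \<Longrightarrow> zq_smul q c u \<in> zqvecs q l"
  by (auto simp: zqvecs_def zq_smul_def)
lemma zero_zqvecs: "0 < q \<Longrightarrow> replicate l 0 \<in> zqvecs q l"
  by (auto simp: zqvecs_def)

lemma dual_subspace:
  assumes "0 < q" shows "is_subspace q l (zq_dual q l A)"
  unfolding is_subspace_def
proof (intro conjI ballI allI impI)
  show "zq_dual q l A \<subseteq> zqvecs q l" by (auto simp: zq_dual_def)
  show "replicate l 0 \<in> zq_dual q l A" using assms by (auto simp: zq_dual_def zq_dot_zero zero_zqvecs)
next
  fix u v assume u: "u \<in> zq_dual q l A" and v: "v \<in> zq_dual q l A"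
  then have len: "length u = length v" by (auto simp: zq_dual_def zqvecs_def)
  show "zq_add q u v \<in> zq_dual q l A"
    using u v assms by (auto simp: zq_dual_def zq_dot_add_left[OF len] zq_add_zqvecs mod_add_eq[symmetric])
next
  fix c v assume c: "c < q" and v: "v \<in> zq_dual q l A"
  show "zq_smul q c v \<in> zq_dual q l A"
    using v assms by (auto simp: zq_dual_def zq_dot_smul_left zq_smul_zqvecs mod_mult_right_eq[symmetric])
qed

lemma finite_zqvecs: "finite (zqvecs q l)"
proof -
  have "zqvecs q l = {xs. set xs \<subseteq> {..<q} \<and> length xs = l}" by (auto simp: zqvecs_def)
  then show ?thesis using finite_lists_length_eq[of "{..<q}" l] by simp
qed

lemma card_zqvecs: "card (zqvecs q l) = q ^ l"
proof -
  have "zqvecs q l = {xs. set xs \<subseteq> {..<q} \<and> length xs = l}" by (auto simp: zqvecs_def)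
  then show ?thesis using card_lists_length_eq[of "{..<q}" l] by simp
qed


lemma omega_pow: "cis (2*pi/real q) ^ k = cis (2*pi*real k/real q)"
  by (simp add: Complex.DeMoivre mult.commute)

lemma cis_int_1: "cis (2*pi*x) = 1 \<Longrightarrow> \<exists>n::int. x = real_of_int n"
proof -
  assume "cis (2*pi*x) = 1"
  then have "cos (2*pi*x) = 1" by (metis cis.sel(1) one_complex.sel(1))
  then obtain n :: int where "2*pi*x = n*2*pi" by (auto simp: cos_one_2pi_int)
  then have "x = n" by simp
  then show ?thesis by blast
qed

lemma omega_eq_1_iff: assumes "0 < q" shows "cis (2*pi/real q) ^ k = 1 \<longleftrightarrow> q dvd k"
proof
  assume h: "cis (2*pi/real q) ^ k = 1"
  then have "cis (2*pi*(real k/real q)) = 1" by (simp add: omega_pow)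
  then obtain n :: int where n: "real k / real q = n" using cis_int_1 by blast
  then have "real k = real_of_int n * real q" using assms by (simp add: field_simps)
  then have "int k = n * int q" by (metis of_int_eq_iff of_int_mult of_int_of_nat_eq)
  then have "int q dvd int k" by simp
  then show "q dvd k" by simp
next
  assume "q dvd k"
  then obtain m where "k = q*m" by blast
  then have "2*pi*real k/real q = 2*pi*real m" using assms by simp
  then show "cis (2*pi/real q) ^ k = 1" by (simp add: omega_pow)
qed

lemma omega_q: "0 < q \<Longrightarrow> cis (2*pi/real q) ^ q = 1"
  by (simp add: omega_eq_1_iff)

lemma omega_mod: assumes "0 < q" shows "cis (2*pi/real q) ^ k = cis (2*pi/real q) ^ (k mod q)"
proof -
  have "k = q * (k div q) + k mod q" by simp
  then have "cis (2*pi/real q) ^ k = (cis (2*pi/real q) ^ q) ^ (k div q) * cis (2*pi/real q) ^ (k mod q)"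
    by (metis power_add power_mult)
  then show ?thesis using omega_q[OF assms] by simp
qed

lemma G_sum:
  assumes "b < q" "c < q"
  shows "(\<Sum>a<q. cis (2*pi/real q) ^ (a*b) * cnj (cis (2*pi/real q) ^ (a*c))) = (if b = c then of_nat q else 0)"
proof -
  have q0: "0 < q" using assms by simp
  define z where "z = cis (2*pi*(real b - real c)/real q)"
  have trm: "cis (2*pi/real q) ^ (a*b) * cnj (cis (2*pi/real q) ^ (a*c)) = z ^ a" for a
    unfolding z_def omega_pow Complex.DeMoivre cis_cnj cis_mult
    by (simp add: algebra_simps diff_divide_distrib)
  have zq: "z ^ q = 1"
  proof -
    have "z ^ q = cis (2*pi*(real_of_int (int b - int c)))" unfolding z_def Complex.DeMoivre using q0 by simp
    also have "\<dots> = 1" by (rule cis_multiple_2pi) simp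
    finally show ?thesis .
  qed
  have z1: "z = 1 \<longleftrightarrow> b = c"
  proof
    assume "z = 1"
    then have "cis (2*pi*((real b - real c)/real q)) = 1" by (simp add: z_def)
    then obtain n :: int where n: "(real b - real c)/real q = n" using cis_int_1 by blast
    then have e: "real b - real c = n * real q" using q0 by (simp add: field_simps)
    have "n = 0"
    proof (rule ccontr)
      assume "n \<noteq> 0"
      then have "\<bar>real_of_int n\<bar> \<ge> 1" by linarith
      then have "\<bar>real_of_int n * real q\<bar> \<ge> real q" by (simp add: abs_mult) (metis mult_right_mono of_nat_0_le_iff mult_1)
      then show False using e assms by linarith
    qed
    then show "b = c" using e by simp
  qed (simp add: z_def)
  show ?thesis
    unfolding trm sum_gp_strict using z1 zq by auto
qed


lemma mod_cancel_nat: "(x + b) mod q = (y + b) mod (q::nat) \<Longrightarrow> x < q \<Longrightarrow> y < q \<Longrightarrow> x = y"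
proof -
  have gen: "x = y" if h: "(x + b) mod q = (y + b) mod (q::nat)" "x < q" "y < q" "x \<le> y" for x y
  proof -
    have "q dvd (y + b) - (x + b)" using h mod_eq_dvd_iff_nat[of "x+b" "y+b" q] by simp
    then have "q dvd y - x" by simp
    moreover have "y - x < q" using h by simp
    ultimately have "y - x = 0" by (metis dvd_imp_le not_less zero_less_iff_neq_zero)
    then show ?thesis using h by simp
  qed
  assume "(x + b) mod q = (y + b) mod (q::nat)" "x < q" "y < q"
  then show "x = y" using gen[of x y] gen[of y x] by (cases "x \<le> y") auto
qed

lemma zq_add_cancel: "length v = length a \<Longrightarrow> length w = length a \<Longrightarrow> set v \<subseteq> {..<q} \<Longrightarrow> set w \<subseteq> {..<q}
  \<Longrightarrow> zq_add q v a = zq_add q w a \<Longrightarrow> v = w"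
proof (induction v arbitrary: w a)
  case Nil then show ?case by simp
next
  case (Cons x v)
  then obtain b a' where a: "a = b # a'" by (cases a) auto
  then obtain y w' where w: "w = y # w'" using Cons by (cases w) auto
  show ?case using Cons a w mod_cancel_nat[of x b q y] by auto
qed

lemma zqvecs_Suc: "zqvecs q (Suc l) = (\<lambda>(a,u). a#u) ` ({..<q} \<times> zqvecs q l)"
  by (auto simp: zqvecs_def length_Suc_conv image_iff)

lemma zqvecs_0: "zqvecs q 0 = {[]}"
  by (auto simp: zqvecs_def)

lemma K_sum:
  assumes "v \<in> zqvecs q l" "w \<in> zqvecs q l"
  shows "(\<Sum>u\<in>zqvecs q l. cis (2*pi/real q) ^ (zq_dot u v) * cnj (cis (2*pi/real q) ^ (zq_dot u w)))
     = (if v = w then of_nat q ^ l else 0)"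
  using assms
proof (induction l arbitrary: v w)
  case 0 then show ?case by (simp add: zqvecs_0)
next
  case (Suc l)
  let ?w = "cis (2*pi/real q)"
  obtain b v' where v: "v = b # v'" "b < q" "v' \<in> zqvecs q l"
    using Suc.prems(1) by (auto simp: zqvecs_Suc)
  obtain c w' where w: "w = c # w'" "c < q" "w' \<in> zqvecs q l"
    using Suc.prems(2) by (auto simp: zqvecs_Suc)
  have inj: "inj_on (\<lambda>(a,u). a#u) ({..<q} \<times> zqvecs q l)" by (auto simp: inj_on_def)
  have "(\<Sum>u\<in>zqvecs q (Suc l). ?w ^ (zq_dot u v) * cnj (?w ^ (zq_dot u w)))
      = (\<Sum>(a,u)\<in>{..<q} \<times> zqvecs q l. ?w ^ (zq_dot (a#u) v) * cnj (?w ^ (zq_dot (a#u) w)))"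
    unfolding zqvecs_Suc by (subst sum.reindex[OF inj]) (simp add: case_prod_unfold)
  also have "\<dots> = (\<Sum>a<q. \<Sum>u\<in>zqvecs q l. (?w ^ (a*b) * cnj (?w ^ (a*c))) * (?w ^ (zq_dot u v') * cnj (?w ^ (zq_dot u w'))))"
    unfolding sum.cartesian_product[symmetric] using v w
    by (intro sum.cong refl) (simp add: power_add algebra_simps)
  also have "\<dots> = (\<Sum>a<q. ?w ^ (a*b) * cnj (?w ^ (a*c))) * (\<Sum>u\<in>zqvecs q l. ?w ^ (zq_dot u v') * cnj (?w ^ (zq_dot u w')))"
    by (simp add: sum_product)
  also have "\<dots> = (if b = c then of_nat q else 0) * (if v' = w' then of_nat q ^ l else 0)"
    using G_sum[OF v(2) w(2)] Suc.IH[OF v(3) w(3)] by simp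
  also have "\<dots> = (if v = w then of_nat q ^ Suc l else 0)" using v w by auto
  finally show ?case .
qed

lemma parseval:
  assumes q0: "0 < q"
  shows "sqnorm q l (qft q l \<psi>) = sqnorm q l \<psi>"
proof -
  let ?Z = "zqvecs q l"
  let ?w = "cis (2*pi/real q)"
  define c :: real where "c = 1 / sqrt (real q ^ l)"
  have c2: "c^2 * real q ^ l = 1" using q0 by (simp add: c_def power_divide)
  have step1: "qft q l \<psi> u * cnj (qft q l \<psi> u) =
     of_real (c^2) * (\<Sum>v\<in>?Z. \<Sum>w\<in>?Z. (?w ^ (zq_dot u v) * cnj (?w ^ (zq_dot u w))) * (\<psi> v * cnj (\<psi> w)))"
    if u: "u \<in> ?Z" for u
  proof -
    have "qft q l \<psi> u = of_real c * (\<Sum>v\<in>?Z. ?w ^ zq_dot u v * \<psi> v)"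
      using u by (simp add: qft_def c_def)
    then show ?thesis
      by (simp add: cnj_sum sum_product power2_eq_square algebra_simps)
  qed
  have "complex_of_real (sqnorm q l (qft q l \<psi>)) = (\<Sum>u\<in>?Z. qft q l \<psi> u * cnj (qft q l \<psi> u))"
    by (simp only: sqnorm_def of_real_sum complex_norm_square)
  also have "\<dots> = (\<Sum>u\<in>?Z. of_real (c^2) * (\<Sum>v\<in>?Z. \<Sum>w\<in>?Z. (?w ^ (zq_dot u v) * cnj (?w ^ (zq_dot u w))) * (\<psi> v * cnj (\<psi> w))))"
    by (rule sum.cong[OF refl]) (rule step1)
  also have "\<dots> = of_real (c^2) * (\<Sum>v\<in>?Z. \<Sum>w\<in>?Z. (\<psi> v * cnj (\<psi> w)) * (\<Sum>u\<in>?Z. ?w ^ (zq_dot u v) * cnj (?w ^ (zq_dot u w))))"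
  proof -
    have "(\<Sum>u\<in>?Z. \<Sum>v\<in>?Z. \<Sum>w\<in>?Z. (?w ^ (zq_dot u v) * cnj (?w ^ (zq_dot u w))) * (\<psi> v * cnj (\<psi> w)))
      = (\<Sum>v\<in>?Z. \<Sum>u\<in>?Z. \<Sum>w\<in>?Z. (?w ^ (zq_dot u v) * cnj (?w ^ (zq_dot u w))) * (\<psi> v * cnj (\<psi> w)))"
      by (rule sum.swap)
    also have "\<dots> = (\<Sum>v\<in>?Z. \<Sum>w\<in>?Z. \<Sum>u\<in>?Z. (?w ^ (zq_dot u v) * cnj (?w ^ (zq_dot u w))) * (\<psi> v * cnj (\<psi> w)))"
      by (rule sum.cong[OF refl], rule sum.swap)
    also have "\<dots> = (\<Sum>v\<in>?Z. \<Sum>w\<in>?Z. (\<psi> v * cnj (\<psi> w)) * (\<Sum>u\<in>?Z. ?w ^ (zq_dot u v) * cnj (?w ^ (zq_dot u w))))"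
      by (simp only: sum_distrib_left mult.commute)
    finally show ?thesis by (simp only: sum_distrib_left[symmetric])
  qed
  also have "\<dots> = of_real (c^2) * (\<Sum>v\<in>?Z. \<Sum>w\<in>?Z. if w = v then (\<psi> v * cnj (\<psi> v)) * of_nat q ^ l else 0)"
  proof -
    have "(\<psi> v * cnj (\<psi> w)) * (\<Sum>u\<in>?Z. ?w ^ (zq_dot u v) * cnj (?w ^ (zq_dot u w)))
       = (if w = v then (\<psi> v * cnj (\<psi> v)) * of_nat q ^ l else 0)" if "v \<in> ?Z" "w \<in> ?Z" for v w
    proof -
      have "(\<Sum>u\<in>?Z. ?w ^ (zq_dot u v) * cnj (?w ^ (zq_dot u w))) = (if v = w then of_nat q ^ l else 0)"
        by (rule K_sum[OF that])
      then show ?thesis by auto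
    qed
    then show ?thesis by (intro arg_cong2[where f="(*)"] refl sum.cong) auto
  qed
  also have "\<dots> = of_real (c^2) * (\<Sum>v\<in>?Z. (\<psi> v * cnj (\<psi> v)) * of_nat q ^ l)"
    by (simp add: finite_zqvecs)
  also have "\<dots> = (\<Sum>v\<in>?Z. \<psi> v * cnj (\<psi> v)) * of_real (c^2 * real q ^ l)"
    by (simp add: sum_distrib_left sum_distrib_right algebra_simps)
  also have "\<dots> = complex_of_real (sqnorm q l \<psi>)"
    by (simp only: c2 of_real_1 mult_1_right sqnorm_def of_real_sum complex_norm_square)
  finally show ?thesis by (simp only: of_real_eq_iff)
qed

lemma char_vanish:
  assumes q0: "0 < q" and A: "is_subspace q l A" and u: "u \<in> zqvecs q l" and nu: "u \<notin> zq_dual q l A"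
  shows "(\<Sum>v\<in>A. cis (2*pi/real q) ^ zq_dot u v) = 0"
proof -
  let ?w = "cis (2*pi/real q)"
  have AZ: "A \<subseteq> zqvecs q l" using A by (auto simp: is_subspace_def)
  have finA: "finite A" using AZ finite_zqvecs finite_subset by blast
  obtain a where a: "a \<in> A" "\<not> q dvd zq_dot u a"
    using u nu by (auto simp: zq_dual_def dvd_eq_mod_eq_0)
  define T where "T v = zq_add q v a" for v
  have TA: "T ` A \<subseteq> A" using A a(1) by (auto simp: is_subspace_def T_def)
  have injT: "inj_on T A"
  proof (rule inj_onI)
    fix v w assume "v \<in> A" "w \<in> A" "T v = T w"
    then show "v = w" using AZ a(1) zq_add_cancel[of v a w q]
      by (auto simp: T_def zqvecs_def subset_iff)
  qed
  have TAeq: "T ` A = A" by (rule endo_inj_surj[OF finA TA injT])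
  have key: "?w ^ zq_dot u (T v) = ?w ^ zq_dot u a * ?w ^ zq_dot u v" if v: "v \<in> A" for v
  proof -
    have len: "length v = length a" using v a(1) AZ by (auto simp: zqvecs_def)
    have "?w ^ zq_dot u (T v) = ?w ^ (zq_dot (zq_add q v a) u mod q)"
      by (subst omega_mod[OF q0]) (simp add: T_def zq_dot_comm)
    also have "\<dots> = ?w ^ ((zq_dot v u + zq_dot a u) mod q)" by (simp add: zq_dot_add_left[OF len])
    also have "\<dots> = ?w ^ (zq_dot v u + zq_dot a u)" by (rule omega_mod[OF q0, symmetric])
    finally show ?thesis by (simp add: power_add zq_dot_comm mult.commute)
  qed
  let ?S = "\<Sum>v\<in>A. ?w ^ zq_dot u v"
  have "?S = (\<Sum>v\<in>T ` A. ?w ^ zq_dot u v)" by (simp add: TAeq)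
  also have "\<dots> = (\<Sum>v\<in>A. ?w ^ zq_dot u (T v))" by (rule sum.reindex[OF injT, unfolded comp_def])
  also have "\<dots> = ?w ^ zq_dot u a * ?S" by (simp add: key sum_distrib_left)
  finally have "(1 - ?w ^ zq_dot u a) * ?S = 0" by (simp add: algebra_simps)
  moreover have "?w ^ zq_dot u a \<noteq> 1" using a(2) omega_eq_1_iff[OF q0] by simp
  ultimately show ?thesis by simp
qed


lemma prob_bind_eq: "measure_pmf.prob (bind_pmf p f) E = (\<integral>x. measure_pmf.prob (f x) E \<partial>measure_pmf p)"
  unfolding measure_pmf_bind
  by (rule measure_pmf.measure_bind[where N="count_space UNIV"]) (auto simp: measure_pmf_in_subprob_algebra)

lemma bern1: "bernoulli_pmf 1 = return_pmf True"
  apply (rule pmf_eqI) subgoal for i by (cases i) auto done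

lemma prob_bind_ge:
  assumes "measure_pmf.prob p B \<le> e1" "0 \<le> e2"
    "\<And>x. x \<in> set_pmf p \<Longrightarrow> x \<notin> B \<Longrightarrow> 1 - e2 \<le> measure_pmf.prob (f x) E"
  shows "1 - e1 - e2 \<le> measure_pmf.prob (bind_pmf p f) E"
proof -
  have int1: "integrable (measure_pmf p) (\<lambda>x. measure_pmf.prob (f x) E)"
    by (rule measure_pmf.integrable_const_bound[where B=1]) auto
  have int3: "integrable (measure_pmf p) (\<lambda>x. indicator B x :: real)"
    by (rule measure_pmf.integrable_const_bound[where B=1]) (auto simp: indicator_def)
  have int2: "integrable (measure_pmf p) (\<lambda>x. 1 - e2 - indicator B x :: real)"
    by (rule measure_pmf.integrable_const_bound[where B="1 + \<bar>e2\<bar>"]) (auto simp: indicator_def)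
  have eq: "(\<integral>x. (1 - e2 - indicator B x :: real) \<partial>measure_pmf p) = 1 - e2 - measure_pmf.prob p B"
    using int3 by (subst Bochner_Integration.integral_diff) (auto simp: measure_pmf.emeasure_space_1)
  have le: "(\<integral>x. (1 - e2 - indicator B x :: real) \<partial>measure_pmf p) \<le> (\<integral>x. measure_pmf.prob (f x) E \<partial>measure_pmf p)"
  proof (rule integral_mono_AE[OF int2 int1])
    show "AE x in measure_pmf p. 1 - e2 - indicator B x \<le> measure_pmf.prob (f x) E"
      using assms(2,3) by (auto simp: AE_measure_pmf_iff indicator_def intro: order_trans[OF _ measure_nonneg])
  qed
  show ?thesis using eq le assms(1) unfolding prob_bind_eq by linarith
qed

lemma prob_bind_ge0:
  assumes "\<And>x. x \<in> set_pmf p \<Longrightarrow> e \<le> measure_pmf.prob (f x) E"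
  shows "e \<le> measure_pmf.prob (bind_pmf p f) E"
proof -
  have int1: "integrable (measure_pmf p) (\<lambda>x. measure_pmf.prob (f x) E)"
    by (rule measure_pmf.integrable_const_bound[where B=1]) auto
  have "e \<le> (\<integral>x. measure_pmf.prob (f x) E \<partial>measure_pmf p)"
    by (rule measure_pmf.integral_ge_const[OF int1]) (use assms in \<open>auto simp: AE_measure_pmf_iff\<close>)
  then show ?thesis by (simp add: prob_bind_eq)
qed

lemma prob_return_ge: "z \<in> E \<Longrightarrow> e \<le> 1 \<Longrightarrow> e \<le> measure_pmf.prob (return_pmf z) E"
  by (simp add: measure_return)

lemma helper1: "(cmod (subspace_state A v))\<^sup>2 = (if v \<in> A then 1 / real (card A) else 0)"
  by (simp add: subspace_state_def norm_divide power_divide)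

lemma helper2: "cnj (subspace_state A v) * subspace_state A v = (if v \<in> A then complex_of_real (1 / real (card A)) else 0)"
proof -
  have "cnj (subspace_state A v) * subspace_state A v = complex_of_real ((cmod (subspace_state A v))\<^sup>2)"
    using complex_norm_square[of "subspace_state A v"] by (simp add: mult.commute)
  then show ?thesis by (simp add: helper1)
qed

context
  fixes q l :: nat and A :: "nat list set"
  assumes q0: "0 < q" and A: "is_subspace q l A"
begin

lemma AZ: "A \<subseteq> zqvecs q l" using A by (auto simp: is_subspace_def)
lemma finA: "finite A" using AZ finite_zqvecs finite_subset by blast
lemma cardA: "card A > 0"
proof -
  have "replicate l 0 \<in> A" using A by (auto simp: is_subspace_def)
  then show ?thesis using finA card_gt_0_iff by blast
qed

lemma sum_state: "(\<Sum>v\<in>zqvecs q l. if v \<in> A then (c::'a::comm_ring_1) else 0) = of_nat (card A) * c"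
proof -
  have e: "zqvecs q l \<inter> A = A" using AZ by blast
  have "(\<Sum>v\<in>zqvecs q l. if v \<in> A then c else 0) = (\<Sum>v\<in>zqvecs q l \<inter> A. c)"
    by (rule sum.inter_restrict[OF finite_zqvecs, symmetric])
  then show ?thesis unfolding e by simp
qed

lemma sqnorm_state: "sqnorm q l (subspace_state A) = 1"
proof -
  have "sqnorm q l (subspace_state A) = (\<Sum>v\<in>zqvecs q l. if v \<in> A then 1 / real (card A) else 0)"
    unfolding sqnorm_def
    by (rule sum.cong) (auto simp: helper1)
  also have "\<dots> = 1" using cardA by (simp add: sum_state)
  finally show ?thesis .
qed

lemma inner_state: "(\<Sum>v\<in>zqvecs q l. cnj (subspace_state A v) * subspace_state A v) = 1"
proof -
  have "(\<Sum>v\<in>zqvecs q l. cnj (subspace_state A v) * subspace_state A v)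
       = (\<Sum>v\<in>zqvecs q l. if v \<in> A then complex_of_real (1 / real (card A)) else 0)"
    by (rule sum.cong) (auto simp: helper2)
  also have "\<dots> = 1" using cardA by (simp add: sum_state)
  finally show ?thesis .
qed

lemma proj_state: "\<forall>v\<in>zqvecs q l. f v = (v \<in> A) \<Longrightarrow> proj_ind f (subspace_state A) = subspace_state A"
  using AZ by (auto simp: proj_ind_def subspace_state_def fun_eq_iff)

lemma proj_qft: "\<forall>v\<in>zqvecs q l. h v = (v \<in> zq_dual q l A) \<Longrightarrow>
   proj_ind h (qft q l (subspace_state A)) = qft q l (subspace_state A)"
proof -
  assume h: "\<forall>v\<in>zqvecs q l. h v = (v \<in> zq_dual q l A)"
  have "qft q l (subspace_state A) u = 0" if u: "u \<in> zqvecs q l" "u \<notin> zq_dual q l A" for u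
  proof -
    have "(\<Sum>v\<in>zqvecs q l. cis (2*pi/real q) ^ zq_dot u v * subspace_state A v)
        = (\<Sum>v\<in>zqvecs q l. if v \<in> A then cis (2*pi/real q) ^ zq_dot u v * complex_of_real (1 / sqrt (real (card A))) else 0)"
      by (rule sum.cong) (auto simp: subspace_state_def divide_inverse)
    also have "\<dots> = (\<Sum>v\<in>zqvecs q l \<inter> A. cis (2*pi/real q) ^ zq_dot u v * complex_of_real (1 / sqrt (real (card A))))"
      by (rule sum.inter_restrict[OF finite_zqvecs, symmetric])
    also have "zqvecs q l \<inter> A = A" using AZ by blast
    also have "(\<Sum>v\<in>A. cis (2*pi/real q) ^ zq_dot u v * complex_of_real (1 / sqrt (real (card A))))
       = (\<Sum>v\<in>A. cis (2*pi/real q) ^ zq_dot u v) * complex_of_real (1 / sqrt (real (card A)))"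
      by (rule sum_distrib_right[symmetric])
    also have "\<dots> = 0" using char_vanish[OF q0 A u] by simp
    finally show ?thesis by (simp add: qft_def)
  qed
  then show ?thesis using h by (auto simp: proj_ind_def fun_eq_iff qft_def)
qed

end

lemma meas_keep: "proj_ind f \<psi> = \<psi> \<Longrightarrow> sqnorm q l \<psi> = 1 \<Longrightarrow> measure_ind q l f \<psi> = return_pmf (True, \<psi>)"
  by (simp add: measure_ind_def bern1 normalize_state_def)


lemma run_ok:
  assumes q0: "0 < q l" and A: "is_subspace (q l) l A"
    and g: "\<forall>v\<in>zqvecs (q l) l. evalP g v = (v \<in> A)"
    and gp: "\<forall>v\<in>zqvecs (q l) l. evalP gp v = (v \<in> zq_dual (q l) l A)"
    and V: "Ver crs (g, gp, Ct) \<pi>"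
  shows "ssl_run q evalP Eval Ver l crs (subspace_state A, g, gp, Ct, \<pi>) x =
    return_pmf (Some ((qft (q l) l (qft (q l) l (subspace_state A)), g, gp, Ct, \<pi>), Eval Ct x))"
proof -
  have m1: "measure_ind (q l) l (evalP g) (subspace_state A) = return_pmf (True, subspace_state A)"
    by (rule meas_keep[OF proj_state[OF q0 A g] sqnorm_state[OF q0 A]])
  have m2: "measure_ind (q l) l (evalP gp) (qft (q l) l (subspace_state A)) = return_pmf (True, qft (q l) l (subspace_state A))"
    by (rule meas_keep[OF proj_qft[OF q0 A gp]]) (simp add: parseval[OF q0] sqnorm_state[OF q0 A])
  show ?thesis using V by (simp add: ssl_run_def m1 m2 bind_return_pmf)
qed

lemma zq_add_append: "length v = length w \<Longrightarrow> zq_add q (v @ x) (w @ y) = zq_add q v w @ zq_add q x y"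
  by (simp add: zq_add_def)

lemma exists_sub:
  assumes q0: "0 < q" and d: "d \<le> l"
  shows "\<exists>A. is_subspace q l A \<and> card A = q ^ d"
proof -
  define pad where "pad v = v @ replicate (l - d) (0::nat)" for v
  define W where "W = pad ` zqvecs q d"
  have inj: "inj_on pad (zqvecs q d)" by (auto simp: inj_on_def pad_def)
  have zadd: "zq_add q (replicate k 0) (replicate k 0) = replicate k 0" for k
    by (induction k) auto
  have zsm: "zq_smul q c (replicate k 0) = replicate k 0" for c k
    by (induction k) auto
  have "is_subspace q l W"
    unfolding is_subspace_def
  proof (intro conjI ballI allI impI)
    show "W \<subseteq> zqvecs q l" using d q0 by (auto simp: W_def pad_def zqvecs_def)
    have "replicate l 0 = pad (replicate d 0)" using d by (simp add: pad_def replicate_add[symmetric])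
    then show "replicate l 0 \<in> W" using q0 by (auto simp: W_def zero_zqvecs)
  next
    fix u v assume "u \<in> W" "v \<in> W"
    then obtain u' v' where u': "u = pad u'" "u' \<in> zqvecs q d" and v': "v = pad v'" "v' \<in> zqvecs q d"
      by (auto simp: W_def)
    have "zq_add q u v = pad (zq_add q u' v')"
      using u' v' by (simp add: pad_def zq_add_append zqvecs_def zadd)
    then show "zq_add q u v \<in> W" using u' v' q0 by (auto simp: W_def zq_add_zqvecs)
  next
    fix c v assume "c < q" "v \<in> W"
    then obtain v' where v': "v = pad v'" "v' \<in> zqvecs q d" by (auto simp: W_def)
    have "zq_smul q c v = pad (zq_smul q c v')"
      using v' by (simp add: pad_def zq_smul_def zsm[unfolded zq_smul_def])
    then show "zq_smul q c v \<in> W" using v' q0 by (auto simp: W_def zq_smul_zqvecs)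
  qed
  moreover have "card W = q ^ d" using card_image[OF inj] by (simp add: W_def card_zqvecs)
  ultimately show ?thesis by blast
qed

lemma set_gen: "0 < q l \<Longrightarrow> set_pmf (ssl_gen q l crs) = subspaces_dim (q l) l (l div 2)"
proof -
  assume q0: "0 < q l"
  have fin: "finite (subspaces_dim (q l) l (l div 2))"
    by (rule finite_subset[of _ "Pow (zqvecs (q l) l)"]) (auto simp: subspaces_dim_def is_subspace_def finite_zqvecs)
  have ne: "subspaces_dim (q l) l (l div 2) \<noteq> {}"
    using exists_sub[OF q0, of "l div 2" l] by (auto simp: subspaces_dim_def)
  show ?thesis by (simp add: ssl_gen_def set_pmf_of_set[OF ne fin])
qed


lemma prob_bind_ge':
  assumes "e \<le> 1 - a - b" "measure_pmf.prob p B \<le> a" "0 \<le> b"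
    "\<And>x. x \<in> set_pmf p \<Longrightarrow> x \<notin> B \<Longrightarrow> 1 - b \<le> measure_pmf.prob (f x) E"
  shows "e \<le> measure_pmf.prob (bind_pmf p f) E"
proof -
  have "1 - a - b \<le> measure_pmf.prob (bind_pmf p f) E"
    by (rule prob_bind_ge[OF assms(2,3)]) (rule assms(4))
  then show ?thesis using assms(1) by linarith
qed

lemma negl_2abs: "negligible \<mu> \<Longrightarrow> negligible (\<lambda>l. 2 * \<bar>\<mu> l\<bar>)"
  unfolding negligible_def
proof (intro allI)
  fix c :: nat
  assume h: "\<forall>c::nat. \<forall>\<^sub>F l in sequentially. \<bar>\<mu> l\<bar> \<le> inverse (real l ^ c)"
  have "\<forall>\<^sub>F l in sequentially. \<bar>\<mu> l\<bar> \<le> inverse (real l ^ Suc c) \<and> l \<ge> 2"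
    using h[rule_format, of "Suc c"] eventually_ge_at_top[of "2::nat"] by (auto intro: eventually_conj)
  then show "\<forall>\<^sub>F l in sequentially. \<bar>2 * \<bar>\<mu> l\<bar>\<bar> \<le> inverse (real l ^ c)"
  proof (rule eventually_mono)
    fix l :: nat assume a: "\<bar>\<mu> l\<bar> \<le> inverse (real l ^ Suc c) \<and> l \<ge> 2"
    have lp: "real l ^ c > 0" using a by simp
    have "2 * inverse (real l ^ Suc c) \<le> inverse (real l ^ c)"
    proof -
      have "2 * inverse (real l ^ Suc c) = (2 / real l) * inverse (real l ^ c)" using a by (simp add: field_simps)
      also have "\<dots> \<le> 1 * inverse (real l ^ c)"
        using a lp by (intro mult_right_mono) (auto simp: field_simps)
      finally show ?thesis by simp
    qed
    moreover have "\<bar>2 * \<bar>\<mu> l\<bar>\<bar> = 2 * \<bar>\<mu> l\<bar>" by simp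
    ultimately show "\<bar>2 * \<bar>\<mu> l\<bar>\<bar> \<le> inverse (real l ^ c)" using a by linarith
  qed
qed

theorem lemma54:
  fixes q n :: "nat \<Rightarrow> nat"
    and Cls :: "nat \<Rightarrow> 'c set"
    and circ :: "'c \<Rightarrow> bool list \<Rightarrow> bool"
    and S :: "'c \<Rightarrow> bool list pmf"
    and Obf :: "nat \<Rightarrow> 'c \<Rightarrow> 'ro \<Rightarrow> 'o" and ro_dist :: "nat \<Rightarrow> 'ro pmf"
    and Eval :: "'o \<Rightarrow> bool list \<Rightarrow> bool"
    and shO :: "nat \<Rightarrow> nat list set \<Rightarrow> 'rs \<Rightarrow> 'p" and rs_dist :: "nat \<Rightarrow> 'rs pmf"
    and evalP :: "'p \<Rightarrow> nat list \<Rightarrow> bool"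
    and CRSGen :: "nat \<Rightarrow> 'crs pmf"
    and Prov :: "'crs \<Rightarrow> ('p \<times> 'p \<times> 'o) \<Rightarrow> (nat list set \<times> 'ro \<times> 'rs \<times> 'rs \<times> 'c \<times> bool list) \<Rightarrow> 'pf pmf"
    and Ver :: "'crs \<Rightarrow> ('p \<times> 'p \<times> 'o) \<Rightarrow> 'pf \<Rightarrow> bool"
  assumes q_prime: "\<forall>l. prime (q l)"
    and searchable: "\<forall>l. \<forall>C\<in>Cls l. \<forall>x\<in>set_pmf (S C). length x = n l \<and> circ C x"
    and qIHO_perfectly_correct:
      "\<forall>l. \<forall>C\<in>Cls l. \<forall>r\<in>set_pmf (ro_dist l). \<forall>x. length x = n l \<longrightarrow> Eval (Obf l C r) x = circ C x"
    and shO_correct: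
      "\<exists>\<mu>. negligible \<mu> \<and> (\<forall>l A. is_subspace (q l) l A \<longrightarrow>
          measure_pmf.prob (rs_dist l) {r. \<exists>v\<in>zqvecs (q l) l. evalP (shO l A r) v \<noteq> (v \<in> A)} \<le> \<mu> l)"
    and NIZK_perfect_completeness:
      "\<forall>l. \<forall>crs\<in>set_pmf (CRSGen (l + n l)). \<forall>st w. ssl_rel q shO Obf circ l st w \<longrightarrow>
          (\<forall>\<pi>\<in>set_pmf (Prov crs st w). Ver crs st \<pi>)"
  shows "\<exists>\<epsilon>. negligible \<epsilon> \<and> (\<forall>l. \<forall>C\<in>Cls l.
     measure_pmf.prob (ssl_exp q n CRSGen shO rs_dist Obf ro_dist S Prov l C)
       {(crs, A, lease). \<forall>x. length x = n l \<longrightarrow>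
          (\<forall>out\<in>set_pmf (ssl_run q evalP Eval Ver l crs lease x). map_option snd out = Some (circ C x))}
       \<ge> 1 - \<epsilon> l
   \<and> measure_pmf.prob (ssl_exp q n CRSGen shO rs_dist Obf ro_dist S Prov l C \<bind>
         (\<lambda>(crs, A, lease). ssl_check q l A lease)) {True}
       \<ge> 1 - \<epsilon> l)"
proof -
  obtain \<mu> where negl: "negligible \<mu>" and mu: "\<And>l A. is_subspace (q l) l A \<Longrightarrow>
      measure_pmf.prob (rs_dist l) {r. \<exists>v\<in>zqvecs (q l) l. evalP (shO l A r) v \<noteq> (v \<in> A)} \<le> \<mu> l"
    using shO_correct by blast
  show ?thesis
  proof (intro exI[of _ "\<lambda>l. 2 * \<bar>\<mu> l\<bar>"] conjI allI ballI)
    show "negligible (\<lambda>l. 2 * \<bar>\<mu> l\<bar>)" by (rule negl_2abs[OF negl])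
  next
    fix l C assume C: "C \<in> Cls l"
    have q0: "0 < q l" using q_prime prime_gt_0_nat by blast
    let ?Z = "zqvecs (q l) l"
    let ?m = "\<bar>\<mu> l\<bar>"
    define E where "E = {(crs::'crs, A::nat list set, lease). \<forall>x. length x = n l \<longrightarrow>
          (\<forall>out\<in>set_pmf (ssl_run q evalP Eval Ver l crs lease x). map_option snd out = Some (circ C x))}"
    define badA where "badA A = {r. \<exists>v\<in>?Z. evalP (shO l A r) v \<noteq> (v \<in> A)}" for A
    have badA: "measure_pmf.prob (rs_dist l) (badA A) \<le> ?m" if "is_subspace (q l) l A" for A
      using mu[OF that] by (simp add: badA_def)
    have final: "(crs, A, subspace_state A, shO l A rA, shO l (zq_dual (q l) l A) rAp, Obf l C ro, \<pi>) \<in> E"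
      if crs: "crs \<in> set_pmf (CRSGen (l + n l))" and A: "is_subspace (q l) l A"
        and ro: "ro \<in> set_pmf (ro_dist l)" and rA: "rA \<notin> badA A"
        and rAp: "rAp \<notin> badA (zq_dual (q l) l A)" and x0: "x0 \<in> set_pmf (S C)"
        and pi: "\<pi> \<in> set_pmf (Prov crs (shO l A rA, shO l (zq_dual (q l) l A) rAp, Obf l C ro) (A, ro, rA, rAp, C, x0))"
      for crs A ro rA rAp x0 \<pi>
    proof -
      have V: "Ver crs (shO l A rA, shO l (zq_dual (q l) l A) rAp, Obf l C ro) \<pi>"
      proof -
        have "circ C x0" using searchable C x0 by blast
        then have "ssl_rel q shO Obf circ l (shO l A rA, shO l (zq_dual (q l) l A) rAp, Obf l C ro) (A, ro, rA, rAp, C, x0)"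
          by (simp add: ssl_rel_def)
        then show ?thesis using NIZK_perfect_completeness crs pi by blast
      qed
      have g: "\<forall>v\<in>?Z. evalP (shO l A rA) v = (v \<in> A)" using rA by (auto simp: badA_def)
      have gp: "\<forall>v\<in>?Z. evalP (shO l (zq_dual (q l) l A) rAp) v = (v \<in> zq_dual (q l) l A)"
        using rAp by (auto simp: badA_def)
      show ?thesis
        unfolding E_def using run_ok[where q=q and l=l and evalP=evalP and g="shO l A rA" and gp="shO l (zq_dual (q l) l A) rAp" and A=A and Ver=Ver and crs=crs and Ct="Obf l C ro" and \<pi>=\<pi>, OF q0 A g gp V] qIHO_perfectly_correct C ro by auto
    qed
    have lessor: "1 - 2 * ?m \<le> measure_pmf.prob (ssl_lessor q shO rs_dist Obf ro_dist S Prov l crs A C \<bind>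
        (\<lambda>lease. return_pmf (crs, A, lease))) E"
      if crs: "crs \<in> set_pmf (CRSGen (l + n l))" and A: "is_subspace (q l) l A" for crs A
      unfolding ssl_lessor_def bind_assoc_pmf bind_return_pmf
      apply (rule prob_bind_ge0)
      apply (rule prob_bind_ge'[where a="?m" and b="?m", OF _ badA[OF A]])
        apply simp
       apply simp
      apply (rule prob_bind_ge'[where a="?m" and b=0, OF _ badA[OF dual_subspace[OF q0]]])
        apply simp
       apply simp
      apply (intro prob_bind_ge0 prob_return_ge final[OF crs A])
            apply assumption+
      apply simp
      done
    show "1 - 2 * ?m \<le> measure_pmf.prob (ssl_exp q n CRSGen shO rs_dist Obf ro_dist S Prov l C)
       {(crs, A, lease). \<forall>x. length x = n l \<longrightarrow>
          (\<forall>out\<in>set_pmf (ssl_run q evalP Eval Ver l crs lease x). map_option snd out = Some (circ C x))}"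
      unfolding E_def[symmetric] ssl_exp_def
      by (intro prob_bind_ge0 lessor) (auto simp: set_gen[where q=q and l=l, OF q0] subspaces_dim_def)
    show "1 - 2 * ?m \<le> measure_pmf.prob (ssl_exp q n CRSGen shO rs_dist Obf ro_dist S Prov l C \<bind>
         (\<lambda>(crs, A, lease). ssl_check q l A lease)) {True}"
      unfolding ssl_exp_def ssl_lessor_def bind_assoc_pmf bind_return_pmf
      apply (intro prob_bind_ge0)
      apply (simp add: set_gen[where q=q and l=l, OF q0] subspaces_dim_def ssl_check_def)
      apply (simp add: inner_state[OF q0] bern1 measure_return)
      done
  qed
qed

end
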